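(* Let $0<q<1$. Define the $q$-Hermite polynomials $H_{n,q}(x)$ by \[ H_q(t)\,e_q(tx)=\sum_{n=0}^\infty H_{n,q}(x)\frac{t^n}{[n]_q!},\qquad H_q(t)=\sum_{n=0}^\infty(-1)^nq^{n(n-1)}\frac{t^{2n}}{[2n]_q!!}. \] Then for every integer $n\ge2$, \[ H_{n,q}(qx)=xq^nH_{n-1,q}(x)-[n-1]_q\,q^{n-2}H_{n-2,q}(x). \]
   Context: $[n]_q=\frac{1-q^n}{1-q}$, $[0]_q!=1$, $[n]_q!=[n]_q\cdots[1]_q$, $[0]_q!!=1$, $[2n]_q!!=[2n]_q[2n-2]_q\cdots[2]_q$, and $e_q(t)=\sum_{n\ge0}\frac{t^n}{[n]_q!}$. *)

theory Defs
  imports Complex_Main "HOL-Computational_Algebra.Formal_Power_Series"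
begin

definition qint :: "real \<Rightarrow> nat \<Rightarrow> real" where
  "qint q n = (1 - q ^ n) / (1 - q)"

definition qfact :: "real \<Rightarrow> nat \<Rightarrow> real" where
  "qfact q n = (\<Prod>k=1..n. qint q k)"

text \<open>qdfact q n = [2n]_q!! = [2n]_q [2n-2]_q ... [2]_q, with [0]_q!! = 1\<close>
definition qdfact :: "real \<Rightarrow> nat \<Rightarrow> real" where
  "qdfact q n = (\<Prod>k=1..n. qint q (2 * k))"

text \<open>H_q(t) = sum_n (-1)^n q^(n(n-1)) t^(2n) / [2n]_q!!, as a formal power series in t\<close>
definition Hq_fps :: "real \<Rightarrow> real fps" where
  "Hq_fps q = Abs_fps (\<lambda>m. if even m
      then (-1) ^ (m div 2) * q ^ ((m div 2) * (m div 2 - 1)) / qdfact q (m div 2)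
      else 0)"

text \<open>e_q(tx) = sum_n x^n t^n / [n]_q!, as a formal power series in t\<close>
definition eq_fps :: "real \<Rightarrow> real \<Rightarrow> real fps" where
  "eq_fps q x = Abs_fps (\<lambda>n. x ^ n / qfact q n)"

definition qHermite :: "real \<Rightarrow> nat \<Rightarrow> real \<Rightarrow> real" where
  "qHermite q n x = qfact q n * fps_nth (Hq_fps q * eq_fps q x) n"

end

theory Submission
  imports Defs
begin

definition hh :: "real \<Rightarrow> nat \<Rightarrow> real" where "hh q i = fps_nth (Hq_fps q) i"

lemma qint_pos: "0 < q \<Longrightarrow> q < 1 \<Longrightarrow> k \<ge> 1 \<Longrightarrow> qint q k > 0"
  unfolding qint_def by (simp add: power_less_one_iff)

lemma qfact_pos: "0 < q \<Longrightarrow> q < 1 \<Longrightarrow> qfact q k > 0"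
  unfolding qfact_def using qint_pos by (intro prod_pos) auto

lemma qfact_Suc: "qfact q (Suc k) = qint q (Suc k) * qfact q k"
  unfolding qfact_def by (simp add: prod.nat_ivl_Suc' mult.commute)

lemma qdfact_Suc: "qdfact q (Suc k) = qint q (2 * Suc k) * qdfact q k"
  unfolding qdfact_def by (simp add: prod.nat_ivl_Suc' mult.commute)

lemma qint_add: "q \<noteq> 1 \<Longrightarrow> qint q (a + b) = qint q a + q ^ a * qint q b"
  unfolding qint_def by (simp add: field_simps power_add)

lemma hh0: "hh q 0 = 1" by (simp add: hh_def Hq_fps_def qdfact_def)
lemma hh1: "hh q (Suc 0) = 0" by (simp add: hh_def Hq_fps_def)

lemma qdfact_pos: "0 < q \<Longrightarrow> q < 1 \<Longrightarrow> qdfact q k > 0"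
  unfolding qdfact_def using qint_pos by (intro prod_pos) auto

lemma hh_rec: assumes q: "0 < q" "q < 1" shows "hh q (k + 2) * qint q (k + 2) = - hh q k * q ^ k"
proof (cases "even k")
  case True
  then obtain l where k: "k = 2 * l" by blast
  have e: "(l + 1) * l = l * (l - 1) + 2 * l" by (cases l) auto
  have d: "(k + 2) div 2 = Suc l" "k div 2 = l" using k by auto
  have "hh q (k + 2) = (-1) ^ Suc l * q ^ (Suc l * l) / qdfact q (Suc l)"
    using True d by (simp add: hh_def Hq_fps_def)
  moreover have "hh q k = (-1) ^ l * q ^ (l * (l - 1)) / qdfact q l"
    using True d by (simp add: hh_def Hq_fps_def)
  moreover have "qint q (k + 2) = qint q (2 * Suc l)" using k by simp
  moreover have "q ^ (Suc l * l) = q ^ (l * (l - 1)) * q ^ k"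
  proof -
    have "Suc l * l = l * (l - 1) + k" using e k by simp
    then show ?thesis by (simp only: power_add)
  qed
  ultimately have "qdfact q l * (hh q (k + 2) * qint q (k + 2)) = qdfact q l * (- hh q k * q ^ k)"
    using qdfact_pos[OF q, of l] qint_pos[OF q, of "2 * Suc l"] by (simp add: qdfact_Suc field_simps)
  then show ?thesis using qdfact_pos[OF q, of l] mult_left_cancel[of "qdfact q l"] by (metis less_irrefl)
next
  case False
  then show ?thesis by (simp add: hh_def Hq_fps_def)
qed

lemma qH_expand: "qHermite q n y = (\<Sum>i=0..n. hh q i * (qfact q n / qfact q (n - i)) * y ^ (n - i))"
  unfolding qHermite_def fps_mult_nth hh_def eq_fps_def
  by (simp add: sum_distrib_left field_simps)

lemma termwise:
  assumes q: "0 < q" "q < 1" and i: "i \<le> m + 2"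
  shows "hh q i * (qfact q (m+2) / qfact q (m+2-i)) * (q*x) ^ (m+2-i)
    = x * q ^ (m+2) * (if i \<le> m + 1 then hh q i * (qfact q (m+1) / qfact q (m+1-i)) * x ^ (m+1-i) else 0)
      - qint q (m+1) * q ^ m * (if 2 \<le> i then hh q (i-2) * (qfact q m / qfact q (m-(i-2))) * x ^ (m-(i-2)) else 0)"
proof -
  have q1: "q \<noteq> 1" using q by simp
  consider "i = 0" | "i = 1" | k where "i = k + 2" "k = m" | k j where "i = k + 2" "m = k + j + 1"
  proof -
    assume h0: "i = 0 \<Longrightarrow> thesis" and h1: "i = 1 \<Longrightarrow> thesis"
      and h3: "\<And>k. i = k + 2 \<Longrightarrow> k = m \<Longrightarrow> thesis"
      and h4: "\<And>k j. i = k + 2 \<Longrightarrow> m = k + j + 1 \<Longrightarrow> thesis"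
    show thesis
    proof (cases "i \<ge> 2")
      case True
      then obtain k where k: "i = k + 2" using le_Suc_ex by (metis add.commute)
      show thesis
      proof (cases "k = m")
        case True then show thesis using h3 k by blast
      next
        case False
        then have "k < m" using i k by simp
        then obtain j where "m = k + j + 1" using less_imp_Suc_add by fastforce
        then show thesis using h4 k by blast
      qed
    next
      case False
      then show thesis using h0 h1 by linarith
    qed
  qed
  then show ?thesis
  proof cases
    case 1
    then show ?thesis using qfact_pos[OF q, of "m+2"] qfact_pos[OF q, of "m+1"] by (simp add: hh0 power_mult_distrib)
  next
    case 2
    then show ?thesis by (simp add: hh1)
  next
    case 3
    have r: "hh q (m + 2) * qint q (m + 2) = - hh q m * q ^ m" using hh_rec[OF q] .
    have f: "qfact q (m+2) = qint q (m+2) * qint q (m+1) * qfact q m"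
      by (simp add: qfact_Suc)
    have z: "qfact q 0 = 1" by (simp add: qfact_def)
    have "hh q (m+2) * qfact q (m+2) = (hh q (m + 2) * qint q (m + 2)) * qint q (m+1) * qfact q m"
      using f by simp
    also have "\<dots> = - qint q (m+1) * q ^ m * (hh q m * qfact q m)" using r by simp
    finally show ?thesis using 3 z by simp
  next
    case 4
    have r: "hh q (k + 2) * qint q (k + 2) = - hh q k * q ^ k" using hh_rec[OF q] .
    have a: "qint q ((k+2)+(j+1)) = qint q (k+2) + q^(k+2) * qint q (j+1)"
      using qint_add[OF q1, of "k+2" "j+1"] .
    have e3: "k+j+3 = (k+2)+(j+1)" by simp
    have p1: "q^(k+j+1) * hh q k = q^(j+1) * (hh q k * q^k)" by (simp add: power_add algebra_simps)
    have p2: "q^(k+j+3) = q^(j+1) * q^(k+2)"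
    proof -
      have "k+j+3 = (j+1)+(k+2)" by simp
      then show ?thesis by (simp only: power_add)
    qed
    have C: "hh q (k+2) * qint q (k+j+3) * q^(j+1) = q^(k+j+3)*hh q (k+2)*qint q (j+1) - q^(k+j+1)*hh q k"
      unfolding p1 p2 e3 a using r by (simp add: algebra_simps power_add)
    define F where "F = qfact q (k+j+2)"
    define Qj where "Qj = qfact q j"
    define I where "I = qint q (j+1)"
    have Fpos: "F > 0" "Qj > 0" "I > 0" using qfact_pos[OF q] qint_pos[OF q] by (auto simp: F_def Qj_def I_def)
    have f1: "qfact q (k+j+3) = qint q (k+j+3) * F" by (simp add: F_def qfact_Suc numeral_3_eq_3)
    have f2: "F = qint q (k+j+2) * qfact q (k+j+1)" by (simp add: F_def qfact_Suc numeral_2_eq_2)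
    have f3: "qfact q (j+1) = I * Qj" by (simp add: I_def Qj_def qfact_Suc)
    have L: "hh q (k+2) * (qfact q (k+j+3) / qfact q (j+1)) * (q*x) ^ (j+1)
       = (x^(j+1) * F / (I*Qj)) * (hh q (k+2) * qint q (k+j+3) * q^(j+1))"
      unfolding f1 f3 by (simp add: power_mult_distrib)
    have R: "x * q ^ (k+j+3) * (hh q (k+2) * (qfact q (k+j+2) / qfact q j) * x ^ j)
      - qint q (k+j+2) * q ^ (k+j+1) * (hh q k * (qfact q (k+j+1) / qfact q (j+1)) * x ^ (j+1))
      = (x^(j+1) * F / (I*Qj)) * (q^(k+j+3)*hh q (k+2)*I - q^(k+j+1)*hh q k)"
      using Fpos unfolding f3 F_def[symmetric] Qj_def[symmetric] f2 by (simp add: field_simps)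
    have G: "hh q (k+2) * (qfact q (k+j+3) / qfact q (j+1)) * (q*x) ^ (j+1) =
      x * q ^ (k+j+3) * (hh q (k+2) * (qfact q (k+j+2) / qfact q j) * x ^ j)
      - qint q (k+j+2) * q ^ (k+j+1) * (hh q k * (qfact q (k+j+1) / qfact q (j+1)) * x ^ (j+1))"
      unfolding L R C I_def ..
    have e: "m + 2 - i = j + 1" "m + 1 - i = j" "m - (i - 2) = j + 1" "m + 2 = k+j+3" "m+1 = k+j+2" "m = k+j+1"
      "i - 2 = k" "i \<le> m + 1" "2 \<le> i"
      using 4 by auto
    show ?thesis
      apply (subst e(1), subst e(2), subst e(3), subst e(7))+
      apply (simp only: e(8) e(9) if_True)
      apply (subst e(4), subst e(5), subst e(6))+
      using G 4 by simp
  qed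
qed

theorem theorem10:
  fixes q x :: real and n :: nat
  assumes "0 < q" and "q < 1" and "n \<ge> 2"
  shows "qHermite q n (q * x)
    = x * q ^ n * qHermite q (n - 1) x - qint q (n - 1) * q ^ (n - 2) * qHermite q (n - 2) x"
proof -
  obtain m where n: "n = m + 2" using assms(3) le_Suc_ex by (metis add.commute)
  define A where "A i = hh q i * (qfact q (m+1) / qfact q (m+1-i)) * x ^ (m+1-i)" for i
  define B where "B i = hh q i * (qfact q m / qfact q (m-i)) * x ^ (m-i)" for i
  have sA: "(\<Sum>i=0..m+1. A i) = (\<Sum>i=0..m+2. (if i \<le> m+1 then A i else 0))"
    by (simp add: sum.atLeast0_atMost_Suc)
  have sB: "(\<Sum>i=0..m. B i) = (\<Sum>i=0..m+2. (if 2 \<le> i then B (i-2) else 0))"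
  proof -
    have e: "m + 2 = Suc (Suc m)" by simp
    show ?thesis unfolding e
      by (subst sum.atLeast0_atMost_Suc_shift, subst sum.atLeast0_atMost_Suc_shift) simp
  qed
  have "qHermite q n (q * x) = (\<Sum>i=0..m+2. hh q i * (qfact q (m+2) / qfact q (m+2-i)) * (q*x) ^ (m+2-i))"
    using n qH_expand by simp
  also have "\<dots> = (\<Sum>i=0..m+2. x * q ^ (m+2) * (if i \<le> m+1 then A i else 0)
      - qint q (m+1) * q ^ m * (if 2 \<le> i then B (i-2) else 0))"
    by (rule sum.cong[OF refl], unfold A_def B_def, rule termwise[OF assms(1,2)], simp)
  also have "\<dots> = x * q ^ (m+2) * (\<Sum>i=0..m+1. A i) - qint q (m+1) * q ^ m * (\<Sum>i=0..m. B i)"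
    unfolding sA sB sum_distrib_left by (simp only: sum_subtractf)
  also have "\<dots> = x * q ^ n * qHermite q (n - 1) x - qint q (n - 1) * q ^ (n - 2) * qHermite q (n - 2) x"
    unfolding n A_def B_def by (simp add: qH_expand)
  finally show ?thesis .
qed

end
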